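(* If $P$ is a quadrilateral (a $4$-sided polygon) with vertices $v_1,v_2,v_3,v_4\in\mathbb{C}$ in counterclockwise order that satisfies the closed cap condition, then $P$ is a parallelogram; more precisely $v_2 - v_1 = v_3 - v_4$.
   Context: Identify $\mathbb{R}^2$ with $\mathbb{C}$. An $n$-sided polygon is a closed region of the plane enclosed by a simple cycle of $n$ straight line segments; its vertices are the endpoints of these segments. For a polygon with vertices $v_1,\dots,v_n$ in counterclockwise order, set $v_{n+1}=v_1$, let $s_k = v_{k+1}-v_k$ be its $k$-th edge, and let $\theta_k\in(0,2\pi)$ be the internal angle at $v_k$. Cap construction (polygonal cap curve): set $\kappa = 4\pi/n$. For each $k$ let $\alpha_k = \pi - \theta_k$ (the counterclockwise turning angle of $P$ at $v_k$, so that $\arg s_k = \arg s_{k-1} + \alpha_k$), $\hat\theta_k = 2\pi - \theta_k - \kappa$, and $\beta_k = \pi - \hat\theta_k$ (so $\alpha_k+\beta_k = \kappa$). Put $\hat v_1 = v_1$, $\hat v_2 = v_2$, and for $k=2,\dots,n$ define $\hat v_{k+1} = \hat v_k + \hat s_k$, where $\hat s_k$ is the complex number with $|\hat s_k| = |s_k|$ whose direction is obtained by turning the direction of $\hat s_{k-1} = \hat v_k - \hat v_{k-1}$ clockwise by the angle $\beta_k$, i.e. $\hat s_k/|\hat s_k| = e^{-i\beta_k}\,\hat s_{k-1}/|\hat s_{k-1}|$. The points $\hat v_1,\dots,\hat v_{n+1}$ are the vertices of the polygonal cap curve of $P$. Closed cap condition: $P$ satisfies the closed cap condition if $\hat v_{n+1}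 = \hat v_1$. *)

theory Defs
  imports "HOL-Analysis.Analysis"
begin

text \<open>A polygon with n vertices is given by v :: nat => complex on indices 1..n.
  Indices are read cyclically: vtx n v 0 = v n, vtx n v (n+1) = v 1.\<close>

definition vtx :: "nat \<Rightarrow> (nat \<Rightarrow> complex) \<Rightarrow> nat \<Rightarrow> complex" where
  "vtx n v k = v (((k + n - 1) mod n) + 1)"

definition edge :: "nat \<Rightarrow> (nat \<Rightarrow> complex) \<Rightarrow> nat \<Rightarrow> complex" where
  "edge n v k = vtx n v (k + 1) - vtx n v k"

definition simple_polygon :: "nat \<Rightarrow> (nat \<Rightarrow> complex) \<Rightarrow> bool" where
  "simple_polygon n v \<longleftrightarrow> 3 \<le> n \<and> inj_on v {1..n} \<and>
     (\<forall>j\<in>{1..n}. \<forall>k\<in>{1..n}. j \<noteq> k \<longrightarrow>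
        closed_segment (vtx n v j) (vtx n v (j+1)) \<inter> closed_segment (vtx n v k) (vtx n v (k+1))
          \<subseteq> {vtx n v j, vtx n v (j+1)} \<inter> {vtx n v k, vtx n v (k+1)})"

text \<open>Counterclockwise order: positive signed (shoelace) area.\<close>
definition ccw_polygon :: "nat \<Rightarrow> (nat \<Rightarrow> complex) \<Rightarrow> bool" where
  "ccw_polygon n v \<longleftrightarrow> (\<Sum>k=1..n. Im (cnj (vtx n v k) * vtx n v (k+1))) > 0"

text \<open>Internal angle at v_k in (0, 2 pi): the counterclockwise angle from the direction
  of v_(k+1) - v_k to the direction of v_(k-1) - v_k (interior lies to the left).\<close>
definition int_angle :: "nat \<Rightarrow> (nat \<Rightarrow> complex) \<Rightarrow> nat \<Rightarrow> real" where
  "int_angle n v k =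
     (let a = Arg ((vtx n v (k + n - 1) - vtx n v k) / (vtx n v (k+1) - vtx n v k))
      in if 0 < a then a else a + 2 * pi)"

definition kappa :: "nat \<Rightarrow> real" where
  "kappa n = 4 * pi / real n"

text \<open>beta_k = pi - hat_theta_k, hat_theta_k = 2 pi - theta_k - kappa.\<close>
definition cap_beta :: "nat \<Rightarrow> (nat \<Rightarrow> complex) \<Rightarrow> nat \<Rightarrow> real" where
  "cap_beta n v k = pi - (2 * pi - int_angle n v k - kappa n)"

fun cap_edge :: "nat \<Rightarrow> (nat \<Rightarrow> complex) \<Rightarrow> nat \<Rightarrow> complex" where
  "cap_edge n v 0 = 0"
| "cap_edge n v (Suc 0) = vtx n v 2 - vtx n v 1"
| "cap_edge n v (Suc (Suc k)) =
     complex_of_real (norm (edge n v (k+2))) * cis (- cap_beta n v (k+2)) *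
       (cap_edge n v (Suc k) / complex_of_real (norm (cap_edge n v (Suc k))))"

fun cap_vtx :: "nat \<Rightarrow> (nat \<Rightarrow> complex) \<Rightarrow> nat \<Rightarrow> complex" where
  "cap_vtx n v 0 = vtx n v 1"
| "cap_vtx n v (Suc 0) = vtx n v 1"
| "cap_vtx n v (Suc (Suc k)) = cap_vtx n v (Suc k) + cap_edge n v (Suc k)"

definition closed_cap :: "nat \<Rightarrow> (nat \<Rightarrow> complex) \<Rightarrow> bool" where
  "closed_cap n v \<longleftrightarrow> cap_vtx n v (n+1) = cap_vtx n v 1"

end

theory Submission
  imports Defs
begin

lemma cis_key:
  fixes a b :: complex
  assumes "a \<noteq> 0" "b \<noteq> 0"
  shows "cis (- Arg (- a / b)) = - (sgn b / sgn a)"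
proof -
  have w: "- a / b \<noteq> 0" using assms by simp
  have "cis (- Arg (- a / b)) = inverse (cis (Arg (- a / b)))"
    by (simp add: cis_inverse)
  also have "\<dots> = inverse (sgn (- a / b))" using w by (simp add: cis_Arg)
  also have "\<dots> = - (sgn b / sgn a)" using assms
    by (simp add: sgn_div_norm field_simps norm_divide norm_minus_commute)
  finally show ?thesis .
qed

lemma beta_eq:
  fixes v :: "nat \<Rightarrow> complex"
  assumes "vtx 4 v (k+3) \<noteq> vtx 4 v k" "vtx 4 v (k+1) \<noteq> vtx 4 v k"
  shows "cis (- cap_beta 4 v k) =
     - (sgn (vtx 4 v (k+1) - vtx 4 v k) / sgn (vtx 4 v k - vtx 4 v (k+3)))"
proof -
  define a where "a = vtx 4 v k - vtx 4 v (k+3)"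
  define b where "b = vtx 4 v (k+1) - vtx 4 v k"
  have a0: "a \<noteq> 0" using assms(1) by (simp add: a_def)
  have b0: "b \<noteq> 0" using assms(2) by (simp add: b_def)
  have q: "(vtx 4 v (k + 4 - 1) - vtx 4 v k) / (vtx 4 v (k+1) - vtx 4 v k) = - a / b"
  proof -
    have e: "k + 4 - 1 = k + 3" by simp
    show ?thesis by (simp only: e) (simp add: a_def b_def)
  qed
  have "cis (- cap_beta 4 v k) = cis (- Arg (- a / b))"
  proof -
    have "cap_beta 4 v k = int_angle 4 v k" by (simp add: cap_beta_def kappa_def)
    moreover have "int_angle 4 v k = Arg (- a/b) \<or> int_angle 4 v k = Arg (- a/b) + 2*pi"
      unfolding int_angle_def Let_def q by auto
    ultimately show ?thesis
      by (auto simp: cis.ctr)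
  qed
  also have "\<dots> = - (sgn b / sgn a)" by (rule cis_key[OF a0 b0])
  finally show ?thesis by (simp add: a_def b_def)
qed

lemma sgn_c: "sgn (z::complex) = z / complex_of_real (cmod z)"
  by (simp add: sgn_div_norm scaleR_conv_of_real divide_inverse mult.commute)

lemma step1:
  fixes a b :: complex assumes "a \<noteq> 0" "b \<noteq> 0"
  shows "complex_of_real (norm b) * (- (sgn b / sgn a)) * (a / complex_of_real (norm a)) = - b"
  using assms by (simp add: sgn_c field_simps norm_minus_commute)

lemma step2:
  fixes a b :: complex assumes "a \<noteq> 0" "b \<noteq> 0"
  shows "complex_of_real (norm b) * (- (sgn b / sgn a)) * (- a / complex_of_real (norm (- a))) = b"
  using assms by (simp add: sgn_c field_simps norm_minus_commute)

lemma vtx_eq: "(k + n - 1) mod n + 1 = j \<Longrightarrow> vtx n v k = v j"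
  by (simp add: vtx_def)

theorem proposition2p2:
  fixes v :: "nat \<Rightarrow> complex"
  assumes "simple_polygon 4 v"
    and "ccw_polygon 4 v"
    and "closed_cap 4 v"
  shows "v 2 - v 1 = v 3 - v 4"
proof -
  have inj: "inj_on v {1..4}" using assms(1) by (simp add: simple_polygon_def)
  have d12: "v 1 \<noteq> v 2" "v 2 \<noteq> v 3" "v 3 \<noteq> v 4" "v 4 \<noteq> v 1" "v 1 \<noteq> v 3" "v 2 \<noteq> v 4"
    using inj_onD[OF inj, of 1 2] inj_onD[OF inj, of 2 3] inj_onD[OF inj, of 3 4]
      inj_onD[OF inj, of 4 1] inj_onD[OF inj, of 1 3] inj_onD[OF inj, of 2 4] by auto
  have V: "vtx 4 v 1 = v 1" "vtx 4 v 2 = v 2" "vtx 4 v 3 = v 3" "vtx 4 v 4 = v 4"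
     "vtx 4 v 5 = v 1" "vtx 4 v 6 = v 2" "vtx 4 v 7 = v 3"
    by (rule vtx_eq, simp)+
  have n: "(2::nat)+3 = 5" "(2::nat)+1 = 3" "(3::nat)+3 = 6" "(3::nat)+1 = 4" "(4::nat)+3 = 7" "(4::nat)+1 = 5"
    by simp_all
  have B2: "cis (- cap_beta 4 v 2) = - (sgn (v 3 - v 2) / sgn (v 2 - v 1))"
    using beta_eq[of v 2] d12 unfolding n V by simp
  have B3: "cis (- cap_beta 4 v 3) = - (sgn (v 4 - v 3) / sgn (v 3 - v 2))"
    using beta_eq[of v 3] d12 unfolding n V by simp
  have B4: "cis (- cap_beta 4 v 4) = - (sgn (v 1 - v 4) / sgn (v 4 - v 3))"
    using beta_eq[of v 4] d12 unfolding n V by simp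
  have E: "edge 4 v 2 = v 3 - v 2" "edge 4 v 3 = v 4 - v 3" "edge 4 v 4 = v 1 - v 4"
    unfolding edge_def n V by simp_all
  have R2: "cap_edge 4 v 2 = complex_of_real (norm (edge 4 v 2)) * cis (- cap_beta 4 v 2) *
       (cap_edge 4 v 1 / complex_of_real (norm (cap_edge 4 v 1)))"
    using cap_edge.simps(3)[of 4 v 0] by (simp add: numeral_2_eq_2)
  have R3: "cap_edge 4 v 3 = complex_of_real (norm (edge 4 v 3)) * cis (- cap_beta 4 v 3) *
       (cap_edge 4 v 2 / complex_of_real (norm (cap_edge 4 v 2)))"
    using cap_edge.simps(3)[of 4 v 1] by (simp add: numeral_2_eq_2 numeral_3_eq_3)
  have R4: "cap_edge 4 v 4 = complex_of_real (norm (edge 4 v 4)) * cis (- cap_beta 4 v 4) *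
       (cap_edge 4 v 3 / complex_of_real (norm (cap_edge 4 v 3)))"
    using cap_edge.simps(3)[of 4 v 2] by (simp add: numeral_2_eq_2 numeral_3_eq_3 eval_nat_numeral)
  have C1': "cap_edge 4 v 1 = vtx 4 v 2 - vtx 4 v 1" using cap_edge.simps(2)[of 4 v] by simp
  have C1: "cap_edge 4 v 1 = v 2 - v 1" unfolding C1' V ..
  have s: "v 2 - v 1 \<noteq> 0" "v 3 - v 2 \<noteq> 0" "v 4 - v 3 \<noteq> 0" "v 1 - v 4 \<noteq> 0" using d12 by auto
  have C2: "cap_edge 4 v 2 = - (v 3 - v 2)"
    unfolding R2 E B2 C1 using step1[OF s(1) s(2)] .
  have C3: "cap_edge 4 v 3 = v 4 - v 3"
    unfolding R3 E B3 C2 using step2[OF s(2) s(3)] .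
  have C4: "cap_edge 4 v 4 = - (v 1 - v 4)"
    unfolding R4 E B4 C3 using step1[OF s(3) s(4)] .
  have W2: "cap_vtx 4 v 2 = cap_vtx 4 v 1 + cap_edge 4 v 1"
    using cap_vtx.simps(3)[of 4 v 0] by (simp add: numeral_2_eq_2)
  have W3: "cap_vtx 4 v 3 = cap_vtx 4 v 2 + cap_edge 4 v 2"
    using cap_vtx.simps(3)[of 4 v 1] by (simp add: numeral_2_eq_2 numeral_3_eq_3)
  have W4: "cap_vtx 4 v 4 = cap_vtx 4 v 3 + cap_edge 4 v 3"
    using cap_vtx.simps(3)[of 4 v 2] by (simp add: eval_nat_numeral)
  have W5: "cap_vtx 4 v 5 = cap_vtx 4 v 4 + cap_edge 4 v 4"
    using cap_vtx.simps(3)[of 4 v 3] by (simp add: eval_nat_numeral)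
  have "cap_vtx 4 v 5 = cap_vtx 4 v 1" using assms(3) by (simp add: closed_cap_def)
  hence "cap_edge 4 v 1 + cap_edge 4 v 2 + cap_edge 4 v 3 + cap_edge 4 v 4 = 0"
    using W2 W3 W4 W5 by (simp add: algebra_simps)
  hence "2 * ((v 2 - v 1) - (v 3 - v 4)) = 0"
    unfolding C1 C2 C3 C4 by algebra
  hence "(v 2 - v 1) - (v 3 - v 4) = 0" by (simp only: mult_eq_0_iff) simp
  thus ?thesis by (simp only: right_minus_eq)
qed

end
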